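(* Fix $\omega\in(0,1)$, $\gamma\in(0,1)$, $\kappa\in(0,1)$, $\Delta\in(0,e-2)$, $G\ge0$, and an integer $\hat\tau_1\ge1$ with $\hat\tau_1^\omega>\frac{1}{1-\ln(2+\Delta)}$. Let $c\ge\frac{\ln(2+\Delta)+1/\hat\tau_1^\omega}{1-\ln(2+\Delta)-1/\hat\tau_1^\omega}$, and let $t_0\ge\hat\tau_1$ be an integer such that $t_1:=t_0+\frac{2c}{\kappa}t_0^\omega$ is an integer. Let $\gamma'=\frac{1+\gamma}{2}$, $\xi=\frac{1-\gamma}{4}$, and define $X_{t_0}=G$ and $X_{t+1}=(1-t^{-\omega})X_t+t^{-\omega}\gamma'G$ for $t\ge t_0$. Then for every $t\ge t_1$, $$X_t\le\Big(\gamma'+\frac{2}{2+\Delta}\xi\Big)G.$$ *)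

theory Defs
  imports Complex_Main
begin

end

theory Submission
  imports Defs
begin

theorem lemma5:
  fixes \<omega> \<gamma> \<kappa> \<Delta> G c :: real
    and tau1 t0 t1 :: nat
    and X :: "nat \<Rightarrow> real"
  assumes "0 < \<omega>" "\<omega> < 1"
    and "0 < \<gamma>" "\<gamma> < 1"
    and "0 < \<kappa>" "\<kappa> < 1"
    and "0 < \<Delta>" "\<Delta> < exp 1 - 2"
    and "G \<ge> 0"
    and "tau1 \<ge> 1"
    and "real tau1 powr \<omega> > 1 / (1 - ln (2 + \<Delta>))"
    and "c \<ge> (ln (2 + \<Delta>) + 1 / real tau1 powr \<omega>) / (1 - ln (2 + \<Delta>) - 1 / real tau1 powr \<omega>)"
    and "t0 \<ge> tau1"
    and "real t1 = real t0 + (2 * c / \<kappa>) * real t0 powr \<omega>"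
    and "X t0 = G"
    and "\<And>t. t \<ge> t0 \<Longrightarrow>
           X (Suc t) = (1 - real t powr (-\<omega>)) * X t + real t powr (-\<omega>) * ((1 + \<gamma>) / 2) * G"
  shows "\<forall>t\<ge>t1. X t \<le> ((1 + \<gamma>) / 2 + 2 / (2 + \<Delta>) * ((1 - \<gamma>) / 4)) * G"
proof -
  define L where "L = ln (2 + \<Delta>)"
  define e where "e = 1 / real tau1 powr \<omega>"
  define a where "a = 2 * c / \<kappa>"
  define B where "B = (1 - \<gamma>) / 2 * G"
  define S where "S t = (\<Sum>s\<in>{t0..<t}. real s powr (-\<omega>))" for t
  have "2 + \<Delta> < exp 1" using assms(8) by simp
  hence L1: "L < 1" unfolding L_def using assms(7)
    by (metis add_pos_pos ln_exp ln_less_cancel_iff exp_gt_zero zero_less_numeral)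
  have L0: "L > 0" unfolding L_def using assms(7) by simp
  have tpos: "real tau1 powr \<omega> > 0" using assms(10) by simp
  have e0: "e > 0" unfolding e_def using tpos by simp
  have "1 / e > 1 / (1 - L)" using assms(11) unfolding e_def L_def by simp
  hence eL: "e < 1 - L" using e0 L1
    by (smt (verit) frac_less2 divide_less_cancel)
  have cge: "c \<ge> (L + e) / (1 - L - e)" using assms(12) unfolding L_def e_def by simp
  have c0: "c > 0" using cge eL L0 e0
    by (smt (verit) divide_pos_pos)
  have cL: "c / (1 + c) \<ge> L + e"
  proof -
    have "c * (1 - L - e) \<ge> L + e" using cge eL by (simp add: pos_divide_le_eq)
    thus ?thesis using c0 by (simp add: pos_le_divide_eq algebra_simps)
  qed
  have a0: "a \<ge> c" unfolding a_def using c0 assms(5,6)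
    by (simp add: pos_le_divide_eq)
  have ac: "a / (1 + a) \<ge> c / (1 + c)" using a0 c0
    by (simp add: divide_simps algebra_simps)
  have t0pos: "real t0 \<ge> 1" using assms(10,13) by simp
  have t0w: "real t0 powr \<omega> \<le> real t0"
    using powr_mono[of \<omega> 1 "real t0"] t0pos assms(2) by simp
  have t1eq: "real t1 = real t0 + a * real t0 powr \<omega>" using assms(14) a_def by simp
  have t01: "real t0 \<le> real t1" using t1eq a0 c0 by simp
  hence t01n: "t0 \<le> t1" by simp
  have t1le: "real t1 \<le> real t0 * (1 + a)" using t1eq t0w a0 c0
    by (simp add: algebra_simps mult_left_mono)
  have card: "real (card {t0..<t1}) = a * real t0 powr \<omega>" using t1eq t01n by simp
  have sumlb: "S t1 \<ge> real (card {t0..<t1}) * real t1 powr (-\<omega>)"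
    unfolding S_def
  proof (rule sum_bounded_below)
    fix s assume "s \<in> {t0..<t1}"
    hence "real s \<ge> 1" "real s \<le> real t1" using t0pos by auto
    thus "real t1 powr (-\<omega>) \<le> real s powr (-\<omega>)"
      using assms(1) by (simp add: powr_mono2')
  qed
  have r0: "0 < real t0 / real t1" "real t0 / real t1 \<le> 1" using t0pos t01 by auto
  have "real (card {t0..<t1}) * real t1 powr (-\<omega>) = a * (real t0 / real t1) powr \<omega>"
    using card t0pos t01 by (simp add: powr_divide powr_minus divide_inverse[symmetric])
  also have "\<dots> \<ge> a * (real t0 / real t1)"
  proof -
    have "(real t0 / real t1) powr 1 \<le> (real t0 / real t1) powr \<omega>"
      using r0 assms(2) by (intro powr_mono') auto
    hence "(real t0 / real t1) \<le> (real t0 / real t1) powr \<omega>" using r0 by simp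
    moreover have "a \<ge> 0" using a0 c0 by simp
    ultimately have "a * (real t0 / real t1) \<le> a * (real t0 / real t1) powr \<omega>" by (rule mult_left_mono)
    thus ?thesis by simp
  qed
  finally have s1: "S t1 \<ge> a * (real t0 / real t1)" using sumlb by (rule order_trans)
  have "a * (real t0 / real t1) \<ge> a / (1 + a)"
  proof -
    have "1 / (1 + a) = real t0 / (real t0 * (1 + a))" using t0pos by simp
    also have "\<dots> \<le> real t0 / real t1" using t1le t0pos t01
      by (intro divide_left_mono) auto
    finally have "real t0 / real t1 \<ge> 1 / (1 + a)" .
    moreover have "a \<ge> 0" using a0 c0 by simp
    ultimately have "a * (1 / (1 + a)) \<le> a * (real t0 / real t1)" by (rule mult_left_mono)
    thus ?thesis by simp
  qed
  hence SL: "S t1 \<ge> L" using s1 ac cL e0 by linarith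
  have B0: "B \<ge> 0" unfolding B_def using assms(4,9) by simp
  have main: "0 \<le> X t - (1+\<gamma>)/2*G \<and> X t - (1+\<gamma>)/2*G \<le> B * exp (- S t)" if "t \<ge> t0" for t
    using that
  proof (induction t rule: dec_induct)
    case base
    show ?case using assms(15) B0 by (simp add: S_def B_def algebra_simps)
  next
    case (step t)
    define q where "q = real t powr (-\<omega>)"
    have tt: "real t \<ge> 1" using step(1) t0pos by simp
    have q0: "q > 0" unfolding q_def using tt by simp
    have q1: "q \<le> 1" unfolding q_def using tt assms(1)
      using powr_mono2'[of "-\<omega>" 1 "real t"] assms(1) by simp
    have rec: "X (Suc t) - (1+\<gamma>)/2*G = (1 - q) * (X t - (1+\<gamma>)/2*G)"
    proof -
      have h: "X (Suc t) = (1 - q) * X t + q * ((1 + \<gamma>) / 2) * G"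
        using assms(16)[OF step(1)] unfolding q_def by simp
      show ?thesis unfolding h by (simp add: field_simps)
    qed
    have St: "S (Suc t) = S t + q" unfolding S_def q_def using step(1) by simp
    have eq: "1 - q \<le> exp (- q)" using exp_ge_add_one_self[of "-q"] by simp
    have "(1 - q) * (X t - (1+\<gamma>)/2*G) \<le> (1 - q) * (B * exp (- S t))"
      using step(3) q1 by (intro mult_left_mono) auto
    also have "\<dots> \<le> exp (-q) * (B * exp (- S t))"
      using eq B0 by (intro mult_right_mono) auto
    also have "\<dots> = B * exp (- S (Suc t))" using St by (simp add: exp_diff mult_exp_exp[symmetric] exp_minus field_simps)
    finally show ?case using rec step(3) q1 by simp
  qed
  show ?thesis
  proof (intro allI impI)
    fix t assume tt: "t \<ge> t1"
    have "S t1 \<le> S t" unfolding S_def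
      using tt by (intro sum_mono2) auto
    hence "exp (- S t) \<le> exp (- L)" using SL by simp
    also have "exp (- L) = 1 / (2 + \<Delta>)" unfolding L_def using assms(7)
      by (simp add: exp_minus inverse_eq_divide)
    finally have "B * exp (- S t) \<le> B / (2 + \<Delta>)" using B0
      by (simp add: mult_left_mono divide_inverse)
    with main[of t] tt t01n have "X t - (1+\<gamma>)/2*G \<le> B / (2 + \<Delta>)" by simp
    thus "X t \<le> ((1 + \<gamma>) / 2 + 2 / (2 + \<Delta>) * ((1 - \<gamma>) / 4)) * G"
      unfolding B_def using assms(7) by (simp add: field_simps)
  qed
qed

end
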